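(* Let $k\ge 2$ and let $W\in\mathcal W^2_{(3k+1)\times 5}$ be such that the word $W^t[1..4]$ formed by its first four columns is a $2$-full word of $\mathcal W^2_{(3k+1)\times 4}$. Then $e(W^t[5])\le -5/3$.
   Context: A 2-dimensional binary word of dimensions $h\times w$ is an $h\times w$ matrix with entries in $\{\square,\blacksquare\}$ (filled cells $\blacksquare$, empty cells $\square$); $|U|_\blacksquare$ is the number of filled cells of $U$. Two cells $(i,j),(i',j')$ are adjacent if $|i-i'|+|j-j'|=1$; the degree of a filled cell is the number of filled cells adjacent to it. $\mathcal W^2_{h\times w}$ is the set of $h\times w$ binary words in which every filled cell has degree at most $2$; $W$ is $2$-full if $|W|_\blacksquare$ is maximal in $\mathcal W^2_{h\times w}$. $W^t[j]$ denotes column $j$ of $W$ (an $h\times 1$ word) and $W^t[j..j']$ the word formed by columns $j$ through $j'$. The excess of an $a\times b$ word $U$ is $e(U)=|U|_\blacksquare-2ab/3$; thus for a column of height $3k+1$, $e=|\text{column}|_\blacksquare-2(3k+1)/3$. *)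

theory Defs
  imports Main Complex_Main
begin

text \<open>An h x w binary word is represented by its set of filled cells (i,j),
  0-indexed, with i < h (row) and j < w (column). Empty cells are the remaining
  positions of {0..<h} x {0..<w}.\<close>

definition bwords :: "nat \<Rightarrow> nat \<Rightarrow> (nat \<times> nat) set set" where
  "bwords h w = {U. U \<subseteq> {0..<h} \<times> {0..<w}}"

definition adjacent :: "nat \<times> nat \<Rightarrow> nat \<times> nat \<Rightarrow> bool" where
  "adjacent c d \<longleftrightarrow>
     \<bar>int (fst c) - int (fst d)\<bar> + \<bar>int (snd c) - int (snd d)\<bar> = 1"

definition degree :: "(nat \<times> nat) set \<Rightarrow> nat \<times> nat \<Rightarrow> nat" where
  "degree U c = card {d \<in> U. adjacent c d}"

definition W2 :: "nat \<Rightarrow> nat \<Rightarrow> (nat \<times> nat) set set" where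
  "W2 h w = {U \<in> bwords h w. \<forall>c\<in>U. degree U c \<le> 2}"

definition two_full :: "nat \<Rightarrow> nat \<Rightarrow> (nat \<times> nat) set \<Rightarrow> bool" where
  "two_full h w U \<longleftrightarrow> U \<in> W2 h w \<and> (\<forall>V\<in>W2 h w. card V \<le> card U)"

text \<open>Columns j..j' (0-indexed, inclusive) of U, re-indexed to start at column 0.\<close>
definition cols :: "(nat \<times> nat) set \<Rightarrow> nat \<Rightarrow> nat \<Rightarrow> (nat \<times> nat) set" where
  "cols U j j' = {(i, c - j) | i c. (i, c) \<in> U \<and> j \<le> c \<and> c \<le> j'}"

definition excess :: "nat \<Rightarrow> nat \<Rightarrow> (nat \<times> nat) set \<Rightarrow> real" where
  "excess a b U = real (card U) - 2 * real a * real b / 3"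

end

theory Submission
  imports Defs
begin

datatype row = R bool bool bool bool bool

definition atm2 :: "bool \<Rightarrow> bool \<Rightarrow> bool \<Rightarrow> bool \<Rightarrow> bool" where
  "atm2 a b c d = (\<not> (a \<and> b \<and> c \<or> a \<and> b \<and> d \<or> a \<and> c \<and> d \<or> b \<and> c \<and> d))"

fun Tx :: "row \<Rightarrow> row \<Rightarrow> row \<Rightarrow> bool" where
  "Tx (R c0 c1 c2 c3 c4) (R u0 u1 u2 u3 u4) (R n0 n1 n2 n3 n4) = ((c0 \<and> n0 \<longrightarrow> (\<not> False \<and> \<not> c1) \<or> ((False \<noteq> c1) \<and> \<not> u0)) \<and> (c1 \<and> n1 \<longrightarrow> (\<not> c0 \<and> \<not> c2) \<or> ((c0 \<noteq> c2) \<and> \<not> u1)) \<and> (c2 \<and> n2 \<longrightarrow> (\<not> c1 \<and> \<not> c3) \<or> ((c1 \<noteq> c3) \<and> \<not> u2)) \<and> (c3 \<and> n3 \<longrightarrow> (\<not> c2 \<and> \<not> c4) \<or> ((c2 \<noteq> c4) \<and> \<not> u3)) \<and> (c4 \<and> n4 \<longrightarrow> (\<not> c3 \<and> \<not> False) \<or> ((c3 \<noteq> False) \<and> \<not> u4)))"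

fun Vx :: "row \<Rightarrow> row \<Rightarrow> bool" where
  "Vx (R c0 c1 c2 c3 c4) (R n0 n1 n2 n3 n4) = ((n0 \<and> c0 \<longrightarrow> \<not> (False \<and> n1)) \<and> (n1 \<and> c1 \<longrightarrow> \<not> (n0 \<and> n2)) \<and> (n2 \<and> c2 \<longrightarrow> \<not> (n1 \<and> n3)) \<and> (n3 \<and> c3 \<longrightarrow> \<not> (n2 \<and> n4)) \<and> (n4 \<and> c4 \<longrightarrow> \<not> (n3 \<and> False)))"

fun Ux :: "row \<Rightarrow> row \<Rightarrow> row" where
  "Ux (R p0 p1 p2 p3 p4) (R c0 c1 c2 c3 c4) = (R (c0 \<and> p0 \<and> (False \<noteq> c1)) (c1 \<and> p1 \<and> (c0 \<noteq> c2)) (c2 \<and> p2 \<and> (c1 \<noteq> c3)) (c3 \<and> p3 \<and> (c2 \<noteq> c4)) (c4 \<and> p4 \<and> (c3 \<noteq> False)))"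

fun OK3 :: "row \<Rightarrow> row \<Rightarrow> row \<Rightarrow> bool" where
  "OK3 (R p0 p1 p2 p3 p4) (R c0 c1 c2 c3 c4) (R n0 n1 n2 n3 n4) = ((c0 \<longrightarrow> atm2 False c1 p0 n0) \<and> (c1 \<longrightarrow> atm2 c0 c2 p1 n1) \<and> (c2 \<longrightarrow> atm2 c1 c3 p2 n2) \<and> (c3 \<longrightarrow> atm2 c2 c4 p3 n3) \<and> (c4 \<longrightarrow> atm2 c3 False p4 n4))"

fun fw :: "row \<Rightarrow> nat" where
  "fw (R a b c d e) = 2 * (of_bool a + of_bool b + of_bool c + of_bool d) + of_bool e"

definition allrows :: "row list" where
  "allrows = [R a b c d e. a \<leftarrow> [False,True], b \<leftarrow> [False,True], c \<leftarrow> [False,True], d \<leftarrow> [False,True], e \<leftarrow> [False,True]]"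

lemma allrows_list: "allrows = [(R False False False False False), (R False False False False True), (R False False False True False), (R False False False True True), (R False False True False False), (R False False True False True), (R False False True True False), (R False False True True True), (R False True False False False), (R False True False False True), (R False True False True False), (R False True False True True), (R False True True False False), (R False True True False True), (R False True True True False), (R False True True True True), (R True False False False False), (R True False False False True), (R True False False True False), (R True False False True True), (R True False True False False), (R True False True False True), (R True False True True False), (R True False True True True), (R True True False False False), (R True True False False True), (R True True False True False), (R True True False True True), (R True True True False False), (R True True True False True), (R True True True True False), (R True True True True True)]" by (simp add: allrows_def)

fun psi0 :: "row \<Rightarrow> row \<Rightarrow> nat" where
  "psi0 (R c0 c1 c2 c3 c4) (R u0 u1 u2 u3 u4) = (if c0 then (if c1 then (if c2 then (if c3 then (if c4 then (if u0 then (if u1 then 0 else (if u2 then 0 else (if u3 then 0 else (if u4 then 13 else 12)))) else (if u1 then 0 else (if u2 then 0 else (if u3 then 0 else (if u4 then 11 else 10))))) else (if u0 then (if u1 then 0 else (if u2 then 0 else (if u3 then (if u4 then 0 else 12) else (if u4 then 0 else 12)))) else (if u1 then 0 else (if u2 then 0 else (if u3 then (if u4 then 0 else 10) else (if u4 then 0 else 10)))))) else (if c4 then (if u0 then (if u1 then 0 else (if u2 then (if u3 then 0 else (if u4 then 0 else 12)) else (if u3 then 0 else (if u4 then 0 else 12)))) else (if u1 then 0 else (if u2 then (if u3 then 0 else (if u4 then 0 else 10)) else (if u3 then 0 else (if u4 then 0 else 10))))) else (if u0 then (if u1 then 0 else (if u2 then (if u3 then 0 else (if u4 then 0 else 11))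 else (if u3 then 0 else (if u4 then 0 else 11)))) else (if u1 then 0 else (if u2 then (if u3 then 0 else (if u4 then 0 else 9)) else (if u3 then 0 else (if u4 then 0 else 9))))))) else (if c3 then (if c4 then (if u0 then (if u1 then (if u2 then 0 else (if u3 then (if u4 then 10 else 11) else (if u4 then 10 else 10))) else (if u2 then 0 else (if u3 then (if u4 then 10 else 12) else (if u4 then 11 else 10)))) else (if u1 then (if u2 then 0 else (if u3 then (if u4 then 9 else 10) else (if u4 then 11 else 10))) else (if u2 then 0 else (if u3 then (if u4 then 9 else 10) else (if u4 then 9 else 8))))) else (if u0 then (if u1 then (if u2 then 0 else (if u3 then 0 else (if u4 then 0 else 10))) else (if u2 then 0 else (if u3 then 0 else (if u4 then 0 else 11)))) else (if u1 then (if u2 then 0 else (if u3 then 0 else (if u4 then 0 else 10))) else (if u2 then 0 else (if u3 then 0 else (if u4 then 0 else 9)))))) else (if c4 then (if u0 then (if u1 then (if u2 then 0 else (if u3 then 0 else (if u4 then 0 else 10))) else (if u2 then 0 else (if u3 then 0 else (if u4 then 0 else 10)))) else (if u1 then (if u2 then 0 else (if u3 then 0 else (if u4 then 0 else 9))) else (if u2 then 0 else (if u3 then 0 else (if u4 then 0 else 8))))) else (if u0 then (if u1 then (if u2 then 0 else (if u3 then 0 else (if u4 then 0 else 9))) else (if u2 then 0 else (if u3 then 0 else (if u4 then 0 else 10)))) else (if u1 then (if u2 then 0 else (if u3 then 0 else (if u4 then 0 else 8))) else (if u2 then 0 else (if u3 then 0 else (if u4 then 0 else 8)))))))) else (if c2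 then (if c3 then (if c4 then (if u0 then 0 else (if u1 then 0 else (if u2 then (if u3 then 0 else (if u4 then 11 else 10)) else (if u3 then 0 else (if u4 then 11 else 10))))) else (if u0 then 0 else (if u1 then 0 else (if u2 then (if u3 then (if u4 then 0 else 9) else (if u4 then 0 else 10)) else (if u3 then (if u4 then 0 else 10) else (if u4 then 0 else 10)))))) else (if c4 then (if u0 then 0 else (if u1 then 0 else (if u2 then 0 else (if u3 then 0 else (if u4 then 0 else 10))))) else (if u0 then 0 else (if u1 then 0 else (if u2 then 0 else (if u3 then 0 else (if u4 then 0 else 9))))))) else (if c3 then (if c4 then (if u0 then 0 else (if u1 then 0 else (if u2 then 0 else (if u3 then (if u4 then 9 else 10) else (if u4 then 9 else 8))))) else (if u0 then 0 else (if u1 then 0 else (if u2 then 0 else (if u3 then 0 else (if u4 then 0 else 9)))))) else (if c4 then (if u0 then 0 else (if u1 then 0 else (if u2 then 0 else (if u3 then 0 else (if u4 then 0 else 8))))) else (if u0 then 0 else (if u1 then 0 else (if u2 then 0 else (if u3 then 0 else (if u4 then 0 else 8))))))))) else (if c1 then (if c2 then (if c3 then (if c4 then (if u0 then 0 else (if u1 then (if u2 then 0 else (if u3 then 0 else (if u4 then 11 else 10))) else (if u2 then 0 else (if u3 then 0 else (if u4 then 11 else 10))))) else (if u0 then 0 else (if u1 then (if u2 then 0 else (if u3 then (if u4 then 0 else 10) else (if u4 then 0 else 10))) else (if u2 then 0 else (if u3 then (if u4 then 0 else 10) else (if u4 then 0 else 10)))))) else (if c4 then (if u0 then 0 else (if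 u1 then (if u2 then (if u3 then 0 else (if u4 then 0 else 7)) else (if u3 then 0 else (if u4 then 0 else 10))) else (if u2 then (if u3 then 0 else (if u4 then 0 else 10)) else (if u3 then 0 else (if u4 then 0 else 10))))) else (if u0 then 0 else (if u1 then (if u2 then (if u3 then 0 else (if u4 then 0 else 6)) else (if u3 then 0 else (if u4 then 0 else 9))) else (if u2 then (if u3 then 0 else (if u4 then 0 else 9)) else (if u3 then 0 else (if u4 then 0 else 9))))))) else (if c3 then (if c4 then (if u0 then 0 else (if u1 then 0 else (if u2 then 0 else (if u3 then (if u4 then 9 else 10) else (if u4 then 9 else 8))))) else (if u0 then 0 else (if u1 then 0 else (if u2 then 0 else (if u3 then 0 else (if u4 then 0 else 9)))))) else (if c4 then (if u0 then 0 else (if u1 then 0 else (if u2 then 0 else (if u3 then 0 else (if u4 then 0 else 8))))) else (if u0 then 0 else (if u1 then 0 else (if u2 then 0 else (if u3 then 0 else (if u4 then 0 else 8)))))))) else (if c2 then (if c3 then (if c4 then (if u0 then 0 else (if u1 then 0 else (if u2 then (if u3 then 0 else (if u4 then 9 else 8)) else (if u3 then 0 else (if u4 then 9 else 8))))) else (if u0 then 0 else (if u1 then 0 else (if u2 then (if u3 then (if u4 then 0 else 7) else (if u4 then 0 else 8)) else (if u3 then (if u4 then 0 else 9) else (if u4 then 0 else 8)))))) else (if c4 then (if u0 then 0 else (if u1 then 0 else (if u2 then 0 else (if u3 then 0 else (if u4 then 0 else 8))))) else (if u0 then 0 else (if u1 then 0 else (if u2 then 0 else (if u3 then 0 else (if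 u4 then 0 else 8))))))) else (if c3 then (if c4 then (if u0 then 0 else (if u1 then 0 else (if u2 then 0 else (if u3 then (if u4 then 7 else 8) else (if u4 then 9 else 8))))) else (if u0 then 0 else (if u1 then 0 else (if u2 then 0 else (if u3 then 0 else (if u4 then 0 else 8)))))) else (if c4 then (if u0 then 0 else (if u1 then 0 else (if u2 then 0 else (if u3 then 0 else (if u4 then 0 else 7))))) else (if u0 then 0 else (if u1 then 0 else (if u2 then 0 else (if u3 then 0 else (if u4 then 0 else 6))))))))))"

fun psi1 :: "row \<Rightarrow> row \<Rightarrow> nat" where
  "psi1 (R c0 c1 c2 c3 c4) (R u0 u1 u2 u3 u4) = (if c0 then (if c1 then (if c2 then (if c3 then (if c4 then (if u0 then (if u1 then 0 else (if u2 then 0 else (if u3 then 0 else (if u4 then 11 else 11)))) else (if u1 then 0 else (if u2 then 0 else (if u3 then 0 else (if u4 then 10 else 9))))) else (if u0 then (if u1 then 0 else (if u2 then 0 else (if u3 then (if u4 then 0 else 11) else (if u4 then 0 else 10)))) else (if u1 then 0 else (if u2 then 0 else (if u3 then (if u4 then 0 else 11) else (if u4 then 0 else 9)))))) else (if c4 then (if u0 then (if u1 then 0 else (if u2 then (if u3 then 0 else (if u4 then 0 else 11)) else (if u3 then 0 else (if u4 then 0 else 11)))) else (if u1 then 0 else (if u2 then (if u3 then 0 else (if u4 then 0 else 10)) else (if u3 then 0 else (if u4 then 0 else 9))))) else (if u0 then (if u1 then 0 else (if u2 then (if u3 then 0 else (if u4 then 0 else 11)) else (if u3 then 0 else (if u4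 then 0 else 10)))) else (if u1 then 0 else (if u2 then (if u3 then 0 else (if u4 then 0 else 9)) else (if u3 then 0 else (if u4 then 0 else 9))))))) else (if c3 then (if c4 then (if u0 then (if u1 then (if u2 then 0 else (if u3 then (if u4 then 9 else 10) else (if u4 then 9 else 9))) else (if u2 then 0 else (if u3 then (if u4 then 9 else 11) else (if u4 then 11 else 10)))) else (if u1 then (if u2 then 0 else (if u3 then (if u4 then 9 else 11) else (if u4 then 11 else 10))) else (if u2 then 0 else (if u3 then (if u4 then 9 else 9) else (if u4 then 9 else 9))))) else (if u0 then (if u1 then (if u2 then 0 else (if u3 then 0 else (if u4 then 0 else 9))) else (if u2 then 0 else (if u3 then 0 else (if u4 then 0 else 10)))) else (if u1 then (if u2 then 0 else (if u3 then 0 else (if u4 then 0 else 10))) else (if u2 then 0 else (if u3 then 0 else (if u4 then 0 else 9)))))) else (if c4 then (if u0 then (if u1 then (if u2 then 0 else (if u3 then 0 else (if u4 then 0 else 9))) else (if u2 then 0 else (if u3 then 0 else (if u4 then 0 else 9)))) else (if u1 then (if u2 then 0 else (if u3 then 0 else (if u4 then 0 else 9))) else (if u2 then 0 else (if u3 then 0 else (if u4 then 0 else 8))))) else (if u0 then (if u1 then (if u2 then 0 else (if u3 then 0 else (if u4 then 0 else 8))) else (if u2 then 0 else (if u3 then 0 else (if u4 then 0 else 9)))) else (if u1 then (if u2 then 0 else (if u3 then 0 else (if u4 then 0 else 9))) else (if u2 then 0 else (if u3 then 0 else (if u4 then 0 else 7)))))))) else (if c2 then (if c3 then (if c4 then (if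 u0 then 0 else (if u1 then 0 else (if u2 then (if u3 then 0 else (if u4 then 11 else 10)) else (if u3 then 0 else (if u4 then 10 else 9))))) else (if u0 then 0 else (if u1 then 0 else (if u2 then (if u3 then (if u4 then 0 else 10) else (if u4 then 0 else 10)) else (if u3 then (if u4 then 0 else 11) else (if u4 then 0 else 9)))))) else (if c4 then (if u0 then 0 else (if u1 then 0 else (if u2 then 0 else (if u3 then 0 else (if u4 then 0 else 9))))) else (if u0 then 0 else (if u1 then 0 else (if u2 then 0 else (if u3 then 0 else (if u4 then 0 else 9))))))) else (if c3 then (if c4 then (if u0 then 0 else (if u1 then 0 else (if u2 then 0 else (if u3 then (if u4 then 9 else 9) else (if u4 then 9 else 8))))) else (if u0 then 0 else (if u1 then 0 else (if u2 then 0 else (if u3 then 0 else (if u4 then 0 else 9)))))) else (if c4 then (if u0 then 0 else (if u1 then 0 else (if u2 then 0 else (if u3 then 0 else (if u4 then 0 else 7))))) else (if u0 then 0 else (if u1 then 0 else (if u2 then 0 else (if u3 then 0 else (if u4 then 0 else 7))))))))) else (if c1 then (if c2 then (if c3 then (if c4 then (if u0 then 0 else (if u1 then (if u2 then 0 else (if u3 then 0 else (if u4 then 11 else 11))) else (if u2 then 0 else (if u3 then 0 else (if u4 then 9 else 9))))) else (if u0 then 0 else (if u1 then (if u2 then 0 else (if u3 then (if u4 then 0 else 11) else (if u4 then 0 else 10))) else (if u2 then 0 else (if u3 then (if u4 then 0 else 9) else (if u4 then 0 else 8)))))) else (if c4 then (if u0 then 0 else (if u1 then (if u2 then (if u3 then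 0 else (if u4 then 0 else 9)) else (if u3 then 0 else (if u4 then 0 else 11))) else (if u2 then (if u3 then 0 else (if u4 then 0 else 9)) else (if u3 then 0 else (if u4 then 0 else 9))))) else (if u0 then 0 else (if u1 then (if u2 then (if u3 then 0 else (if u4 then 0 else 8)) else (if u3 then 0 else (if u4 then 0 else 10))) else (if u2 then (if u3 then 0 else (if u4 then 0 else 9)) else (if u3 then 0 else (if u4 then 0 else 8))))))) else (if c3 then (if c4 then (if u0 then 0 else (if u1 then 0 else (if u2 then 0 else (if u3 then (if u4 then 9 else 10) else (if u4 then 9 else 9))))) else (if u0 then 0 else (if u1 then 0 else (if u2 then 0 else (if u3 then 0 else (if u4 then 0 else 9)))))) else (if c4 then (if u0 then 0 else (if u1 then 0 else (if u2 then 0 else (if u3 then 0 else (if u4 then 0 else 9))))) else (if u0 then 0 else (if u1 then 0 else (if u2 then 0 else (if u3 then 0 else (if u4 then 0 else 8)))))))) else (if c2 then (if c3 then (if c4 then (if u0 then 0 else (if u1 then 0 else (if u2 then (if u3 then 0 else (if u4 then 11 else 10)) else (if u3 then 0 else (if u4 then 9 else 9))))) else (if u0 then 0 else (if u1 then 0 else (if u2 then (if u3 then (if u4 then 0 else 8) else (if u4 then 0 else 10)) else (if u3 then (if u4 then 0 else 9) else (if u4 then 0 else 8)))))) else (if c4 then (if u0 then 0 else (if u1 then 0 else (if u2 then 0 else (if u3 then 0 else (if u4 then 0 else 9))))) else (if u0 then 0 else (if u1 then 0 else (if u2 then 0 else (if u3 then 0 else (if u4 then 0 else 8))))))) else (if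 c3 then (if c4 then (if u0 then 0 else (if u1 then 0 else (if u2 then 0 else (if u3 then (if u4 then 7 else 9) else (if u4 then 9 else 8))))) else (if u0 then 0 else (if u1 then 0 else (if u2 then 0 else (if u3 then 0 else (if u4 then 0 else 8)))))) else (if c4 then (if u0 then 0 else (if u1 then 0 else (if u2 then 0 else (if u3 then 0 else (if u4 then 0 else 7))))) else (if u0 then 0 else (if u1 then 0 else (if u2 then 0 else (if u3 then 0 else (if u4 then 0 else 7))))))))))"

fun psi2 :: "row \<Rightarrow> row \<Rightarrow> nat" where
  "psi2 (R c0 c1 c2 c3 c4) (R u0 u1 u2 u3 u4) = (if c0 then (if c1 then (if c2 then (if c3 then (if c4 then (if u0 then (if u1 then 0 else (if u2 then 0 else (if u3 then 0 else (if u4 then 10 else 10)))) else (if u1 then 0 else (if u2 then 0 else (if u3 then 0 else (if u4 then 10 else 10))))) else (if u0 then (if u1 then 0 else (if u2 then 0 else (if u3 then (if u4 then 0 else 11) else (if u4 then 0 else 9)))) else (if u1 then 0 else (if u2 then 0 else (if u3 then (if u4 then 0 else 11) else (if u4 then 0 else 9)))))) else (if c4 then (if u0 then (if u1 then 0 else (if u2 then (if u3 then 0 else (if u4 then 0 else 12)) else (if u3 then 0 else (if u4 then 0 else 10)))) else (if u1 then 0 else (if u2 then (if u3 then 0 else (if u4 then 0 else 10)) else (if u3 then 0 else (if u4 then 0 else 10))))) else (if u0 then (if u1 then 0 else (if u2 then (if u3 then 0 else (if u4 then 0 else 11)) else (if u3 then 0 else (if u4 then 0 else 9)))) else (if u1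 then 0 else (if u2 then (if u3 then 0 else (if u4 then 0 else 9)) else (if u3 then 0 else (if u4 then 0 else 9))))))) else (if c3 then (if c4 then (if u0 then (if u1 then (if u2 then 0 else (if u3 then (if u4 then 12 else 11) else (if u4 then 10 else 9))) else (if u2 then 0 else (if u3 then (if u4 then 10 else 11) else (if u4 then 10 else 10)))) else (if u1 then (if u2 then 0 else (if u3 then (if u4 then 10 else 11) else (if u4 then 10 else 10))) else (if u2 then 0 else (if u3 then (if u4 then 9 else 11) else (if u4 then 10 else 9))))) else (if u0 then (if u1 then (if u2 then 0 else (if u3 then 0 else (if u4 then 0 else 11))) else (if u2 then 0 else (if u3 then 0 else (if u4 then 0 else 10)))) else (if u1 then (if u2 then 0 else (if u3 then 0 else (if u4 then 0 else 10))) else (if u2 then 0 else (if u3 then 0 else (if u4 then 0 else 10)))))) else (if c4 then (if u0 then (if u1 then (if u2 then 0 else (if u3 then 0 else (if u4 then 0 else 10))) else (if u2 then 0 else (if u3 then 0 else (if u4 then 0 else 10)))) else (if u1 then (if u2 then 0 else (if u3 then 0 else (if u4 then 0 else 10))) else (if u2 then 0 else (if u3 then 0 else (if u4 then 0 else 9))))) else (if u0 then (if u1 then (if u2 then 0 else (if u3 then 0 else (if u4 then 0 else 9))) else (if u2 then 0 else (if u3 then 0 else (if u4 then 0 else 9)))) else (if u1 then (if u2 then 0 else (if u3 then 0 else (if u4 then 0 else 9))) else (if u2 then 0 else (if u3 then 0 else (if u4 then 0 else 9)))))))) else (if c2 then (if c3 then (if c4 then (if u0 then 0 else (if u1 then 0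 else (if u2 then (if u3 then 0 else (if u4 then 12 else 11)) else (if u3 then 0 else (if u4 then 10 else 10))))) else (if u0 then 0 else (if u1 then 0 else (if u2 then (if u3 then (if u4 then 0 else 10) else (if u4 then 0 else 11)) else (if u3 then (if u4 then 0 else 11) else (if u4 then 0 else 9)))))) else (if c4 then (if u0 then 0 else (if u1 then 0 else (if u2 then 0 else (if u3 then 0 else (if u4 then 0 else 10))))) else (if u0 then 0 else (if u1 then 0 else (if u2 then 0 else (if u3 then 0 else (if u4 then 0 else 9))))))) else (if c3 then (if c4 then (if u0 then 0 else (if u1 then 0 else (if u2 then 0 else (if u3 then (if u4 then 10 else 11) else (if u4 then 10 else 9))))) else (if u0 then 0 else (if u1 then 0 else (if u2 then 0 else (if u3 then 0 else (if u4 then 0 else 10)))))) else (if c4 then (if u0 then 0 else (if u1 then 0 else (if u2 then 0 else (if u3 then 0 else (if u4 then 0 else 10))))) else (if u0 then 0 else (if u1 then 0 else (if u2 then 0 else (if u3 then 0 else (if u4 then 0 else 9))))))))) else (if c1 then (if c2 then (if c3 then (if c4 then (if u0 then 0 else (if u1 then (if u2 then 0 else (if u3 then 0 else (if u4 then 10 else 10))) else (if u2 then 0 else (if u3 then 0 else (if u4 then 8 else 8))))) else (if u0 then 0 else (if u1 then (if u2 then 0 else (if u3 then (if u4 then 0 else 11) else (if u4 then 0 else 9))) else (if u2 then 0 else (if u3 then (if u4 then 0 else 9) else (if u4 then 0 else 7)))))) else (if c4 then (if u0 then 0 else (if u1 then (if u2 then (if u3 then 0 else (if u4 then 0 else 8))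 else (if u3 then 0 else (if u4 then 0 else 10))) else (if u2 then (if u3 then 0 else (if u4 then 0 else 10)) else (if u3 then 0 else (if u4 then 0 else 8))))) else (if u0 then 0 else (if u1 then (if u2 then (if u3 then 0 else (if u4 then 0 else 7)) else (if u3 then 0 else (if u4 then 0 else 9))) else (if u2 then (if u3 then 0 else (if u4 then 0 else 9)) else (if u3 then 0 else (if u4 then 0 else 7))))))) else (if c3 then (if c4 then (if u0 then 0 else (if u1 then 0 else (if u2 then 0 else (if u3 then (if u4 then 10 else 9) else (if u4 then 8 else 8))))) else (if u0 then 0 else (if u1 then 0 else (if u2 then 0 else (if u3 then 0 else (if u4 then 0 else 9)))))) else (if c4 then (if u0 then 0 else (if u1 then 0 else (if u2 then 0 else (if u3 then 0 else (if u4 then 0 else 8))))) else (if u0 then 0 else (if u1 then 0 else (if u2 then 0 else (if u3 then 0 else (if u4 then 0 else 7)))))))) else (if c2 then (if c3 then (if c4 then (if u0 then 0 else (if u1 then 0 else (if u2 then (if u3 then 0 else (if u4 then 10 else 9)) else (if u3 then 0 else (if u4 then 8 else 8))))) else (if u0 then 0 else (if u1 then 0 else (if u2 then (if u3 then (if u4 then 0 else 8) else (if u4 then 0 else 9)) else (if u3 then (if u4 then 0 else 9) else (if u4 then 0 else 7)))))) else (if c4 then (if u0 then 0 else (if u1 then 0 else (if u2 then 0 else (if u3 then 0 else (if u4 then 0 else 8))))) else (if u0 then 0 else (if u1 then 0 else (if u2 then 0 else (if u3 then 0 else (if u4 then 0 else 7))))))) else (if c3 then (if c4 then (if u0 then 0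 else (if u1 then 0 else (if u2 then 0 else (if u3 then (if u4 then 8 else 9) else (if u4 then 8 else 8))))) else (if u0 then 0 else (if u1 then 0 else (if u2 then 0 else (if u3 then 0 else (if u4 then 0 else 8)))))) else (if c4 then (if u0 then 0 else (if u1 then 0 else (if u2 then 0 else (if u3 then 0 else (if u4 then 0 else 8))))) else (if u0 then 0 else (if u1 then 0 else (if u2 then 0 else (if u3 then 0 else (if u4 then 0 else 7))))))))))"

definition psi :: "nat \<Rightarrow> row \<Rightarrow> row \<Rightarrow> nat" where
  "psi j = (if j = 0 then psi0 else if j = 1 then psi1 else psi2)"

definition stp :: "nat \<Rightarrow> row \<Rightarrow> bool" where
  "stp j c = list_all (\<lambda>u. psi j c u = 0 \<or> (6 \<le> psi j c u \<and>
     list_all (\<lambda>n. \<not> (Tx c u n \<and> Vx c n) \<or>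
        (psi j c u + fw n \<le> psi ((j+1) mod 3) n (Ux c n) + 6 \<and> psi ((j+1) mod 3) n (Ux c n) \<noteq> 0)) allrows)) allrows"

definition ini :: "row \<Rightarrow> bool" where
  "ini r = list_all (\<lambda>n. \<not> (Tx r (R False False False False False) n \<and> Vx r n) \<or>
        (fw r + fw n + 10 \<le> psi 2 n (Ux r n) + 12 \<and> psi 2 n (Ux r n) \<noteq> 0)) allrows"

lemma stp_0_0: "stp 0 (R False False False False False)" by (simp add: stp_def allrows_list psi_def)
lemma stp_0_1: "stp 0 (R True False False False False)" by (simp add: stp_def allrows_list psi_def)
lemma stp_0_2: "stp 0 (R False True False False False)" by (simp add: stp_def allrows_list psi_def)
lemma stp_0_3: "stp 0 (R True True False False False)" by (simp add: stp_def allrows_list psi_def)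
lemma stp_0_4: "stp 0 (R False False True False False)" by (simp add: stp_def allrows_list psi_def)
lemma stp_0_5: "stp 0 (R True False True False False)" by (simp add: stp_def allrows_list psi_def)
lemma stp_0_6: "stp 0 (R False True True False False)" by (simp add: stp_def allrows_list psi_def)
lemma stp_0_7: "stp 0 (R True True True False False)" by (simp add: stp_def allrows_list psi_def)
lemma stp_0_8: "stp 0 (R False False False True False)" by (simp add: stp_def allrows_list psi_def)
lemma stp_0_9: "stp 0 (R True False False True False)" by (simp add: stp_def allrows_list psi_def)
lemma stp_0_10: "stp 0 (R False True False True False)" by (simp add: stp_def allrows_list psi_def)
lemma stp_0_11: "stp 0 (R True True False True False)" by (simp add: stp_def allrows_list psi_def)
lemma stp_0_12: "stp 0 (R False False True True False)" by (simp add: stp_def allrows_list psi_def)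
lemma stp_0_13: "stp 0 (R True False True True False)" by (simp add: stp_def allrows_list psi_def)
lemma stp_0_14: "stp 0 (R False True True True False)" by (simp add: stp_def allrows_list psi_def)
lemma stp_0_15: "stp 0 (R True True True True False)" by (simp add: stp_def allrows_list psi_def)
lemma stp_0_16: "stp 0 (R False False False False True)" by (simp add: stp_def allrows_list psi_def)
lemma stp_0_17: "stp 0 (R True False False False True)" by (simp add: stp_def allrows_list psi_def)
lemma stp_0_18: "stp 0 (R False True False False True)" by (simp add: stp_def allrows_list psi_def)
lemma stp_0_19: "stp 0 (R True True False False True)" by (simp add: stp_def allrows_list psi_def)
lemma stp_0_20: "stp 0 (R False False True False True)" by (simp add: stp_def allrows_list psi_def)
lemma stp_0_21: "stp 0 (R True False True False True)" by (simp add: stp_def allrows_list psi_def)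
lemma stp_0_22: "stp 0 (R False True True False True)" by (simp add: stp_def allrows_list psi_def)
lemma stp_0_23: "stp 0 (R True True True False True)" by (simp add: stp_def allrows_list psi_def)
lemma stp_0_24: "stp 0 (R False False False True True)" by (simp add: stp_def allrows_list psi_def)
lemma stp_0_25: "stp 0 (R True False False True True)" by (simp add: stp_def allrows_list psi_def)
lemma stp_0_26: "stp 0 (R False True False True True)" by (simp add: stp_def allrows_list psi_def)
lemma stp_0_27: "stp 0 (R True True False True True)" by (simp add: stp_def allrows_list psi_def)
lemma stp_0_28: "stp 0 (R False False True True True)" by (simp add: stp_def allrows_list psi_def)
lemma stp_0_29: "stp 0 (R True False True True True)" by (simp add: stp_def allrows_list psi_def)
lemma stp_0_30: "stp 0 (R False True True True True)" by (simp add: stp_def allrows_list psi_def)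
lemma stp_0_31: "stp 0 (R True True True True True)" by (simp add: stp_def allrows_list psi_def)
lemma stp_1_0: "stp 1 (R False False False False False)" by (simp add: stp_def allrows_list psi_def)
lemma stp_1_1: "stp 1 (R True False False False False)" by (simp add: stp_def allrows_list psi_def)
lemma stp_1_2: "stp 1 (R False True False False False)" by (simp add: stp_def allrows_list psi_def)
lemma stp_1_3: "stp 1 (R True True False False False)" by (simp add: stp_def allrows_list psi_def)
lemma stp_1_4: "stp 1 (R False False True False False)" by (simp add: stp_def allrows_list psi_def)
lemma stp_1_5: "stp 1 (R True False True False False)" by (simp add: stp_def allrows_list psi_def)
lemma stp_1_6: "stp 1 (R False True True False False)" by (simp add: stp_def allrows_list psi_def)
lemma stp_1_7: "stp 1 (R True True True False False)" by (simp add: stp_def allrows_list psi_def)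
lemma stp_1_8: "stp 1 (R False False False True False)" by (simp add: stp_def allrows_list psi_def)
lemma stp_1_9: "stp 1 (R True False False True False)" by (simp add: stp_def allrows_list psi_def)
lemma stp_1_10: "stp 1 (R False True False True False)" by (simp add: stp_def allrows_list psi_def)
lemma stp_1_11: "stp 1 (R True True False True False)" by (simp add: stp_def allrows_list psi_def)
lemma stp_1_12: "stp 1 (R False False True True False)" by (simp add: stp_def allrows_list psi_def)
lemma stp_1_13: "stp 1 (R True False True True False)" by (simp add: stp_def allrows_list psi_def)
lemma stp_1_14: "stp 1 (R False True True True False)" by (simp add: stp_def allrows_list psi_def)
lemma stp_1_15: "stp 1 (R True True True True False)" by (simp add: stp_def allrows_list psi_def)
lemma stp_1_16: "stp 1 (R False False False False True)" by (simp add: stp_def allrows_list psi_def)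
lemma stp_1_17: "stp 1 (R True False False False True)" by (simp add: stp_def allrows_list psi_def)
lemma stp_1_18: "stp 1 (R False True False False True)" by (simp add: stp_def allrows_list psi_def)
lemma stp_1_19: "stp 1 (R True True False False True)" by (simp add: stp_def allrows_list psi_def)
lemma stp_1_20: "stp 1 (R False False True False True)" by (simp add: stp_def allrows_list psi_def)
lemma stp_1_21: "stp 1 (R True False True False True)" by (simp add: stp_def allrows_list psi_def)
lemma stp_1_22: "stp 1 (R False True True False True)" by (simp add: stp_def allrows_list psi_def)
lemma stp_1_23: "stp 1 (R True True True False True)" by (simp add: stp_def allrows_list psi_def)
lemma stp_1_24: "stp 1 (R False False False True True)" by (simp add: stp_def allrows_list psi_def)
lemma stp_1_25: "stp 1 (R True False False True True)" by (simp add: stp_def allrows_list psi_def)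
lemma stp_1_26: "stp 1 (R False True False True True)" by (simp add: stp_def allrows_list psi_def)
lemma stp_1_27: "stp 1 (R True True False True True)" by (simp add: stp_def allrows_list psi_def)
lemma stp_1_28: "stp 1 (R False False True True True)" by (simp add: stp_def allrows_list psi_def)
lemma stp_1_29: "stp 1 (R True False True True True)" by (simp add: stp_def allrows_list psi_def)
lemma stp_1_30: "stp 1 (R False True True True True)" by (simp add: stp_def allrows_list psi_def)
lemma stp_1_31: "stp 1 (R True True True True True)" by (simp add: stp_def allrows_list psi_def)
lemma stp_2_0: "stp 2 (R False False False False False)" by (simp add: stp_def allrows_list psi_def)
lemma stp_2_1: "stp 2 (R True False False False False)" by (simp add: stp_def allrows_list psi_def)
lemma stp_2_2: "stp 2 (R False True False False False)" by (simp add: stp_def allrows_list psi_def)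
lemma stp_2_3: "stp 2 (R True True False False False)" by (simp add: stp_def allrows_list psi_def)
lemma stp_2_4: "stp 2 (R False False True False False)" by (simp add: stp_def allrows_list psi_def)
lemma stp_2_5: "stp 2 (R True False True False False)" by (simp add: stp_def allrows_list psi_def)
lemma stp_2_6: "stp 2 (R False True True False False)" by (simp add: stp_def allrows_list psi_def)
lemma stp_2_7: "stp 2 (R True True True False False)" by (simp add: stp_def allrows_list psi_def)
lemma stp_2_8: "stp 2 (R False False False True False)" by (simp add: stp_def allrows_list psi_def)
lemma stp_2_9: "stp 2 (R True False False True False)" by (simp add: stp_def allrows_list psi_def)
lemma stp_2_10: "stp 2 (R False True False True False)" by (simp add: stp_def allrows_list psi_def)
lemma stp_2_11: "stp 2 (R True True False True False)" by (simp add: stp_def allrows_list psi_def)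
lemma stp_2_12: "stp 2 (R False False True True False)" by (simp add: stp_def allrows_list psi_def)
lemma stp_2_13: "stp 2 (R True False True True False)" by (simp add: stp_def allrows_list psi_def)
lemma stp_2_14: "stp 2 (R False True True True False)" by (simp add: stp_def allrows_list psi_def)
lemma stp_2_15: "stp 2 (R True True True True False)" by (simp add: stp_def allrows_list psi_def)
lemma stp_2_16: "stp 2 (R False False False False True)" by (simp add: stp_def allrows_list psi_def)
lemma stp_2_17: "stp 2 (R True False False False True)" by (simp add: stp_def allrows_list psi_def)
lemma stp_2_18: "stp 2 (R False True False False True)" by (simp add: stp_def allrows_list psi_def)
lemma stp_2_19: "stp 2 (R True True False False True)" by (simp add: stp_def allrows_list psi_def)
lemma stp_2_20: "stp 2 (R False False True False True)" by (simp add: stp_def allrows_list psi_def)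
lemma stp_2_21: "stp 2 (R True False True False True)" by (simp add: stp_def allrows_list psi_def)
lemma stp_2_22: "stp 2 (R False True True False True)" by (simp add: stp_def allrows_list psi_def)
lemma stp_2_23: "stp 2 (R True True True False True)" by (simp add: stp_def allrows_list psi_def)
lemma stp_2_24: "stp 2 (R False False False True True)" by (simp add: stp_def allrows_list psi_def)
lemma stp_2_25: "stp 2 (R True False False True True)" by (simp add: stp_def allrows_list psi_def)
lemma stp_2_26: "stp 2 (R False True False True True)" by (simp add: stp_def allrows_list psi_def)
lemma stp_2_27: "stp 2 (R True True False True True)" by (simp add: stp_def allrows_list psi_def)
lemma stp_2_28: "stp 2 (R False False True True True)" by (simp add: stp_def allrows_list psi_def)
lemma stp_2_29: "stp 2 (R True False True True True)" by (simp add: stp_def allrows_list psi_def)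
lemma stp_2_30: "stp 2 (R False True True True True)" by (simp add: stp_def allrows_list psi_def)
lemma stp_2_31: "stp 2 (R True True True True True)" by (simp add: stp_def allrows_list psi_def)
lemma ini_0: "ini (R False False False False False)" by (simp add: ini_def allrows_list psi_def)
lemma ini_1: "ini (R True False False False False)" by (simp add: ini_def allrows_list psi_def)
lemma ini_2: "ini (R False True False False False)" by (simp add: ini_def allrows_list psi_def)
lemma ini_3: "ini (R True True False False False)" by (simp add: ini_def allrows_list psi_def)
lemma ini_4: "ini (R False False True False False)" by (simp add: ini_def allrows_list psi_def)
lemma ini_5: "ini (R True False True False False)" by (simp add: ini_def allrows_list psi_def)
lemma ini_6: "ini (R False True True False False)" by (simp add: ini_def allrows_list psi_def)
lemma ini_7: "ini (R True True True False False)" by (simp add: ini_def allrows_list psi_def)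
lemma ini_8: "ini (R False False False True False)" by (simp add: ini_def allrows_list psi_def)
lemma ini_9: "ini (R True False False True False)" by (simp add: ini_def allrows_list psi_def)
lemma ini_10: "ini (R False True False True False)" by (simp add: ini_def allrows_list psi_def)
lemma ini_11: "ini (R True True False True False)" by (simp add: ini_def allrows_list psi_def)
lemma ini_12: "ini (R False False True True False)" by (simp add: ini_def allrows_list psi_def)
lemma ini_13: "ini (R True False True True False)" by (simp add: ini_def allrows_list psi_def)
lemma ini_14: "ini (R False True True True False)" by (simp add: ini_def allrows_list psi_def)
lemma ini_15: "ini (R True True True True False)" by (simp add: ini_def allrows_list psi_def)
lemma ini_16: "ini (R False False False False True)" by (simp add: ini_def allrows_list psi_def)
lemma ini_17: "ini (R True False False False True)" by (simp add: ini_def allrows_list psi_def)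
lemma ini_18: "ini (R False True False False True)" by (simp add: ini_def allrows_list psi_def)
lemma ini_19: "ini (R True True False False True)" by (simp add: ini_def allrows_list psi_def)
lemma ini_20: "ini (R False False True False True)" by (simp add: ini_def allrows_list psi_def)
lemma ini_21: "ini (R True False True False True)" by (simp add: ini_def allrows_list psi_def)
lemma ini_22: "ini (R False True True False True)" by (simp add: ini_def allrows_list psi_def)
lemma ini_23: "ini (R True True True False True)" by (simp add: ini_def allrows_list psi_def)
lemma ini_24: "ini (R False False False True True)" by (simp add: ini_def allrows_list psi_def)
lemma ini_25: "ini (R True False False True True)" by (simp add: ini_def allrows_list psi_def)
lemma ini_26: "ini (R False True False True True)" by (simp add: ini_def allrows_list psi_def)
lemma ini_27: "ini (R True True False True True)" by (simp add: ini_def allrows_list psi_def)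
lemma ini_28: "ini (R False False True True True)" by (simp add: ini_def allrows_list psi_def)
lemma ini_29: "ini (R True False True True True)" by (simp add: ini_def allrows_list psi_def)
lemma ini_30: "ini (R False True True True True)" by (simp add: ini_def allrows_list psi_def)
lemma ini_31: "ini (R True True True True True)" by (simp add: ini_def allrows_list psi_def)
lemma stp_all_0: "list_all (stp 0) allrows" by (simp only: allrows_list list.pred_inject simp_thms stp_0_0 stp_0_1 stp_0_2 stp_0_3 stp_0_4 stp_0_5 stp_0_6 stp_0_7 stp_0_8 stp_0_9 stp_0_10 stp_0_11 stp_0_12 stp_0_13 stp_0_14 stp_0_15 stp_0_16 stp_0_17 stp_0_18 stp_0_19 stp_0_20 stp_0_21 stp_0_22 stp_0_23 stp_0_24 stp_0_25 stp_0_26 stp_0_27 stp_0_28 stp_0_29 stp_0_30 stp_0_31)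
lemma stp_all_1: "list_all (stp 1) allrows" by (simp only: allrows_list list.pred_inject simp_thms stp_1_0 stp_1_1 stp_1_2 stp_1_3 stp_1_4 stp_1_5 stp_1_6 stp_1_7 stp_1_8 stp_1_9 stp_1_10 stp_1_11 stp_1_12 stp_1_13 stp_1_14 stp_1_15 stp_1_16 stp_1_17 stp_1_18 stp_1_19 stp_1_20 stp_1_21 stp_1_22 stp_1_23 stp_1_24 stp_1_25 stp_1_26 stp_1_27 stp_1_28 stp_1_29 stp_1_30 stp_1_31)
lemma stp_all_2: "list_all (stp 2) allrows" by (simp only: allrows_list list.pred_inject simp_thms stp_2_0 stp_2_1 stp_2_2 stp_2_3 stp_2_4 stp_2_5 stp_2_6 stp_2_7 stp_2_8 stp_2_9 stp_2_10 stp_2_11 stp_2_12 stp_2_13 stp_2_14 stp_2_15 stp_2_16 stp_2_17 stp_2_18 stp_2_19 stp_2_20 stp_2_21 stp_2_22 stp_2_23 stp_2_24 stp_2_25 stp_2_26 stp_2_27 stp_2_28 stp_2_29 stp_2_30 stp_2_31)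
lemma ini_all: "list_all ini allrows" by (simp only: allrows_list list.pred_inject simp_thms ini_0 ini_1 ini_2 ini_3 ini_4 ini_5 ini_6 ini_7 ini_8 ini_9 ini_10 ini_11 ini_12 ini_13 ini_14 ini_15 ini_16 ini_17 ini_18 ini_19 ini_20 ini_21 ini_22 ini_23 ini_24 ini_25 ini_26 ini_27 ini_28 ini_29 ini_30 ini_31)
lemma fin_all: "list_all (\<lambda>c. list_all (\<lambda>u. psi 1 c u \<le> 11) allrows) allrows"
  by (simp add: allrows_list psi_def)




lemma adj_iff: "adjacent (i,j) (a,b) \<longleftrightarrow>
   (a = Suc i \<and> b = j) \<or> (a = i \<and> b = Suc j) \<or> (Suc a = i \<and> b = j) \<or> (a = i \<and> Suc b = j)"
  unfolding adjacent_def by auto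

lemma deg_formula: "degree U (i,j) = of_bool ((Suc i, j) \<in> U) + of_bool ((i, Suc j) \<in> U)
   + of_bool (0 < i \<and> (i-1,j) \<in> U) + of_bool (0 < j \<and> (i,j-1) \<in> U)"
proof -
  define N where "N = {(Suc i, j), (i, Suc j)} \<union> (if 0 < i then {(i-1,j)} else {}) \<union> (if 0 < j then {(i,j-1)} else {})"
  have fin: "finite N" by (simp add: N_def)
  have "{d \<in> U. adjacent (i,j) d} = N \<inter> U" unfolding N_def by (auto simp: adj_iff)
  hence "degree U (i,j) = card (N \<inter> U)" by (simp add: degree_def)
  also have "\<dots> = (\<Sum>d\<in>N. of_bool (d \<in> U))" using fin by (simp add: Int_def)
  also have "\<dots> = of_bool ((Suc i, j) \<in> U) + of_bool ((i, Suc j) \<in> U)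
   + of_bool (0 < i \<and> (i-1,j) \<in> U) + of_bool (0 < j \<and> (i,j-1) \<in> U)"
    unfolding N_def by (cases i; cases j) (simp_all del: sum_of_bool_eq)
  finally show ?thesis .
qed



definition z :: row where "z = R False False False False False"

definition rowW :: "(nat \<times> nat) set \<Rightarrow> nat \<Rightarrow> row" where
  "rowW U i = R ((i,0)\<in>U) ((i,1)\<in>U) ((i,2)\<in>U) ((i,3)\<in>U) ((i,4)\<in>U)"

definition prv :: "(nat \<times> nat) set \<Rightarrow> nat \<Rightarrow> row" where
  "prv U i = (if i = 0 then z else rowW U (i-1))"

lemma ob4: "(of_bool d + of_bool r + of_bool u + of_bool l \<le> (2::nat)) \<longleftrightarrow> atm2 l r u d"
  by (cases d; cases r; cases u; cases l) (simp_all add: atm2_def)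

lemma deg_le2: "degree U (i,j) \<le> 2 \<longleftrightarrow>
   atm2 (0 < j \<and> (i,j-1) \<in> U) ((i, Suc j) \<in> U) (0 < i \<and> (i-1,j) \<in> U) ((Suc i, j) \<in> U)"
  unfolding deg_formula ob4 ..

lemma OK3_iff:
  assumes sub: "U \<subseteq> {0..<h} \<times> {0..<5}"
  shows "(\<forall>c\<in>U. degree U c \<le> 2) \<longleftrightarrow> (\<forall>i. OK3 (prv U i) (rowW U i) (rowW U (Suc i)))"
proof
  assume A: "\<forall>c\<in>U. degree U c \<le> 2"
  show "\<forall>i. OK3 (prv U i) (rowW U i) (rowW U (Suc i))"
  proof
    fix i
    have D: "\<And>j. (i,j) \<in> U \<Longrightarrow> atm2 (0 < j \<and> (i,j-1) \<in> U) ((i, Suc j) \<in> U) (0 < i \<and> (i-1,j) \<in> U) ((Suc i, j) \<in> U)"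
      using A deg_le2 by blast
    have n5: "(i, 5) \<notin> U" using sub by auto
    have D0: "(i,0) \<in> U \<Longrightarrow> atm2 False ((i, 1) \<in> U) (0 < i \<and> (i-1,0) \<in> U) ((Suc i, 0) \<in> U)"
      using D[of 0] by simp
    have D1: "(i,1) \<in> U \<Longrightarrow> atm2 ((i,0) \<in> U) ((i, 2) \<in> U) (0 < i \<and> (i-1,1) \<in> U) ((Suc i, 1) \<in> U)"
      using D[of 1] by (simp add: numeral_2_eq_2)
    have D2: "(i,2) \<in> U \<Longrightarrow> atm2 ((i,1) \<in> U) ((i, 3) \<in> U) (0 < i \<and> (i-1,2) \<in> U) ((Suc i, 2) \<in> U)"
      using D[of 2] by (simp add: numeral_3_eq_3 numeral_2_eq_2)
    have D3: "(i,3) \<in> U \<Longrightarrow> atm2 ((i,2) \<in> U) ((i, 4) \<in> U) (0 < i \<and> (i-1,3) \<in> U) ((Suc i, 3) \<in> U)"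
      using D[of 3] by (simp add: eval_nat_numeral)
    have D4: "(i,4) \<in> U \<Longrightarrow> atm2 ((i,3) \<in> U) False (0 < i \<and> (i-1,4) \<in> U) ((Suc i, 4) \<in> U)"
      using D[of 4] n5 by (simp add: eval_nat_numeral)
    show "OK3 (prv U i) (rowW U i) (rowW U (Suc i))"
    proof (cases i)
      case 0
      then show ?thesis using D0 D1 D2 D3 D4 by (simp add: prv_def rowW_def z_def)
    next
      case (Suc m)
      then show ?thesis using D0 D1 D2 D3 D4 by (simp add: prv_def rowW_def)
    qed
  qed
next
  assume B: "\<forall>i. OK3 (prv U i) (rowW U i) (rowW U (Suc i))"
  show "\<forall>c\<in>U. degree U c \<le> 2"
  proof
    fix c assume cU: "c \<in> U"
    obtain i j where c: "c = (i,j)" by fastforce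
    have j5: "j < 5" using sub cU c by auto
    have n5: "(i, 5) \<notin> U" using sub by auto
    have Bi: "OK3 (prv U i) (rowW U i) (rowW U (Suc i))" using B by blast
    have "j = 0 \<or> j = 1 \<or> j = 2 \<or> j = 3 \<or> j = 4" using j5 by arith
    then have "atm2 (0 < j \<and> (i,j-1) \<in> U) ((i, Suc j) \<in> U) (0 < i \<and> (i-1,j) \<in> U) ((Suc i, j) \<in> U)"
    proof (cases i)
      case 0
      then show ?thesis using Bi cU c n5 \<open>j = 0 \<or> _\<close> 
        by (auto simp: prv_def rowW_def z_def eval_nat_numeral)
    next
      case (Suc m)
      then show ?thesis using Bi cU c n5 \<open>j = 0 \<or> _\<close>
        by (auto simp: prv_def rowW_def eval_nat_numeral)
    qed
    then show "degree U c \<le> 2" using c deg_le2 by simp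
  qed
qed

lemma atmV: "(n \<longrightarrow> atm2 a b c d) \<Longrightarrow> n \<and> c \<longrightarrow> \<not> (a \<and> b)" by (auto simp: atm2_def)
lemma atmT: "(c \<longrightarrow> atm2 l r p n) \<Longrightarrow> c \<and> n \<longrightarrow> (\<not> l \<and> \<not> r) \<or> ((l \<noteq> r) \<and> \<not> (c \<and> p \<and> (l \<noteq> r)))"
  by (auto simp: atm2_def)
lemma V_R: "OK3 (R c0 c1 c2 c3 c4) (R n0 n1 n2 n3 n4) (R m0 m1 m2 m3 m4) \<Longrightarrow> Vx (R c0 c1 c2 c3 c4) (R n0 n1 n2 n3 n4)"
  unfolding OK3.simps Vx.simps
  apply (elim conjE)
  apply (intro conjI)
  apply (erule atmV)+
  done
lemma T_R: "OK3 (R p0 p1 p2 p3 p4) (R c0 c1 c2 c3 c4) (R n0 n1 n2 n3 n4) \<Longrightarrow> Tx (R c0 c1 c2 c3 c4) (Ux (R p0 p1 p2 p3 p4) (R c0 c1 c2 c3 c4)) (R n0 n1 n2 n3 n4)"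
  unfolding OK3.simps Tx.simps Ux.simps 
  apply (elim conjE)
  apply (intro conjI)
  apply (erule atmT)+
  done
lemma TV: "OK3 p c n \<Longrightarrow> OK3 c n m \<Longrightarrow> Tx c (Ux p c) n \<and> Vx c n"
  by (cases p; cases c; cases n; cases m) (metis T_R V_R)
lemma Ux_z: "Ux z c = z" by (cases c) (simp add: z_def)

lemma in_all: "r \<in> set allrows"
  apply (cases r)
  apply (rename_tac a b c d e)
  apply (case_tac a; case_tac b; case_tac c; case_tac d; case_tac e)
  apply (simp_all add: allrows_list)
  done

lemma stp_all: "j < 3 \<Longrightarrow> stp j c"
proof -
  assume "j < 3"
  then have "j = 0 \<or> j = 1 \<or> j = 2" by arith
  then show ?thesis using stp_all_0 stp_all_1 stp_all_2 in_all[of c]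
    by (auto simp: list_all_iff)
qed

lemma ini_allr: "ini r" using ini_all in_all[of r] by (auto simp: list_all_iff)

lemma fin_allr: "psi 1 c u \<le> 11" using fin_all in_all[of c] in_all[of u] by (auto simp: list_all_iff)

lemma inv:
  fixes rs pv :: "nat \<Rightarrow> row"
  assumes H: "\<And>i. Tx (rs i) (Ux (pv i) (rs i)) (rs (Suc i)) \<and> Vx (rs i) (rs (Suc i))"
    and pvdef: "\<And>i. pv i = (if i = 0 then z else rs (i - 1))"
    and h2: "2 \<le> h"
  shows "psi (h mod 3) (rs (h-1)) (Ux (pv (h-1)) (rs (h-1))) \<noteq> 0 \<and>
    (\<Sum>i<h. fw (rs i)) + 10 \<le> 6*h + psi (h mod 3) (rs (h-1)) (Ux (pv (h-1)) (rs (h-1)))"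
  using h2
proof (induction h rule: nat_induct_at_least)
  case base
  have I: "ini (rs 0)" by (rule ini_allr)
  have H0: "Tx (rs 0) z (rs 1) \<and> Vx (rs 0) (rs 1)" using H[of 0] pvdef[of 0] by (simp add: Ux_z)
  have "fw (rs 0) + fw (rs 1) + 10 \<le> psi 2 (rs 1) (Ux (rs 0) (rs 1)) + 12 \<and> psi 2 (rs 1) (Ux (rs 0) (rs 1)) \<noteq> 0"
    using I H0 in_all[of "rs 1"] unfolding ini_def list_all_iff z_def by blast
  moreover have "pv 1 = rs 0" using pvdef[of 1] by simp
  ultimately show ?case by (simp add: numeral_2_eq_2)
next
  case (Suc h)
  let ?j = "h mod 3"
  let ?c = "rs (h-1)"
  let ?u = "Ux (pv (h-1)) (rs (h-1))"
  have S: "stp ?j ?c" by (rule stp_all) simp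
  have hh: "Suc (h - 1) = h" using Suc.hyps by simp
  have Hh: "Tx ?c ?u (rs h) \<and> Vx ?c (rs h)" using H[of "h-1"] hh by simp
  have nz: "psi ?j ?c ?u \<noteq> 0" using Suc.IH by blast
  have step: "psi ?j ?c ?u + fw (rs h) \<le> psi ((?j+1) mod 3) (rs h) (Ux ?c (rs h)) + 6 \<and> psi ((?j+1) mod 3) (rs h) (Ux ?c (rs h)) \<noteq> 0"
  proof -
    have S1: "psi ?j ?c ?u = 0 \<or> (6 \<le> psi ?j ?c ?u \<and> (\<forall>n\<in>set allrows. \<not> (Tx ?c ?u n \<and> Vx ?c n) \<or>
        (psi ?j ?c ?u + fw n \<le> psi ((?j+1) mod 3) n (Ux ?c n) + 6 \<and> psi ((?j+1) mod 3) n (Ux ?c n) \<noteq> 0)))"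
      using S in_all[of ?u] unfolding stp_def list_all_iff by (rule bspec)
    then have S2: "\<forall>n\<in>set allrows. \<not> (Tx ?c ?u n \<and> Vx ?c n) \<or>
        (psi ?j ?c ?u + fw n \<le> psi ((?j+1) mod 3) n (Ux ?c n) + 6 \<and> psi ((?j+1) mod 3) n (Ux ?c n) \<noteq> 0)"
      using nz by blast
    show ?thesis using bspec[OF S2 in_all[of "rs h"]] Hh by blast
  qed
  have jm: "(?j+1) mod 3 = Suc h mod 3" by (simp add: mod_Suc_eq)
  have pvh: "pv h = ?c" using pvdef[of h] Suc.hyps by simp
  show ?case using Suc.IH step jm pvh by simp
qed

lemma card_filt: "finite A \<Longrightarrow> card {x\<in>A. P x} = (\<Sum>x\<in>A. of_bool (P x) :: nat)"
  by (simp add: Int_def)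

lemma fw_rowW: "fw (rowW U i) = 2 * card {j\<in>{..<4::nat}. (i,j)\<in>U} + of_bool ((i,4)\<in>U)"
proof -
  have "card {j\<in>{..<4::nat}. (i,j)\<in>U} = (\<Sum>j<4. of_bool ((i,j)\<in>U))"
    by (rule card_filt) simp
  also have "\<dots> = of_bool ((i,0)\<in>U) + of_bool ((i,1)\<in>U) + of_bool ((i,2)\<in>U) + of_bool ((i,3)\<in>U)"
    by (simp add: eval_nat_numeral)
  finally show ?thesis by (simp add: rowW_def)
qed

lemma fw_sum:
  assumes sub: "U \<subseteq> {0..<h} \<times> {0..<5}"
  shows "(\<Sum>i<h. fw (rowW U i)) = 2 * card (cols U 0 3) + card (cols U 4 4)"
proof -
  have A: "cols U 0 3 = Sigma {..<h} (\<lambda>i. {j\<in>{..<4::nat}. (i,j)\<in>U})"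
    using sub unfolding cols_def by auto
  have cA: "card (cols U 0 3) = (\<Sum>i<h. card {j\<in>{..<4::nat}. (i,j)\<in>U})"
    unfolding A by (rule card_SigmaI) auto
  have B: "cols U 4 4 = (\<lambda>i. (i,0::nat)) ` {i\<in>{..<h}. (i,4)\<in>U}"
  proof
    show "cols U 4 4 \<subseteq> (\<lambda>i. (i,0::nat)) ` {i\<in>{..<h}. (i,4)\<in>U}"
      using sub unfolding cols_def by force
    show "(\<lambda>i. (i,0::nat)) ` {i\<in>{..<h}. (i,4)\<in>U} \<subseteq> cols U 4 4"
      unfolding cols_def by force
  qed
  have cB: "card (cols U 4 4) = (\<Sum>i<h. of_bool ((i,4)\<in>U))"
  proof -
    have "card (cols U 4 4) = card {i\<in>{..<h}. (i,4)\<in>U}"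
      unfolding B by (rule card_image) (auto simp: inj_on_def)
    also have "\<dots> = (\<Sum>i<h. of_bool ((i,4)\<in>U))" by (rule card_filt) simp
    finally show ?thesis .
  qed
  show ?thesis unfolding cA cB fw_rowW by (simp add: sum.distrib sum_distrib_left)
qed

definition rA :: row where "rA = R True True True False False"
definition rB :: row where "rB = R True False True True False"
definition rC :: row where "rC = R True True False True False"
definition rD :: row where "rD = R False True True False False"
definition rE :: row where "rE = R True False False True False"
definition rF :: row where "rF = R True True True True False"

definition bk :: "nat \<Rightarrow> row" where
  "bk i = (if i mod 3 = 1 then rB else if i mod 3 = 2 then rC else rD)"

definition wr :: "nat \<Rightarrow> nat \<Rightarrow> row" where
  "wr k i = (if i = 0 then rA else if i + 2 \<le> 3*k then bk i else if i + 1 = 3*k then rE else if i = 3*k then rF else z)"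

fun bt :: "row \<Rightarrow> nat \<Rightarrow> bool" where
  "bt (R a b c d e) j = (j = 0 \<and> a \<or> j = 1 \<and> b \<or> j = 2 \<and> c \<or> j = 3 \<and> d \<or> j = 4 \<and> e)"

definition Vw :: "nat \<Rightarrow> (nat \<times> nat) set" where
  "Vw k = {(i,j). j < 5 \<and> bt (wr k i) j}"

lemma rowW_Vw: "rowW (Vw k) i = wr k i"
  by (cases "wr k i") (simp add: rowW_def Vw_def)

lemma wr_bt4: "\<not> bt (wr k i) 4"
  by (simp add: wr_def bk_def rA_def rB_def rC_def rD_def rE_def rF_def z_def split: if_split)

lemma wr_z: "3*k < i \<Longrightarrow> wr k i = z"
  by (simp add: wr_def)

lemma Vw_sub: "Vw k \<subseteq> {0..<3*k+1} \<times> {0..<4}"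
proof
  fix x assume x: "x \<in> Vw k"
  obtain i j where ij: "x = (i,j)" by fastforce
  have j5: "j < 5" and b: "bt (wr k i) j" using x ij by (auto simp: Vw_def)
  have "i < 3*k+1"
  proof (rule ccontr)
    assume "\<not> i < 3*k+1"
    then have "wr k i = z" by (intro wr_z) simp
    then show False using b by (simp add: z_def)
  qed
  moreover have "j \<noteq> 4" using b wr_bt4[of k i] by auto
  ultimately show "x \<in> {0..<3*k+1} \<times> {0..<4}" using ij j5 by auto
qed

lemma OK3_z: "OK3 p z n" by (cases p; cases n) (simp add: z_def)

lemma bkS: "bk (Suc x) = (if x mod 3 = 0 then rB else if x mod 3 = 1 then rC else rD)"
proof -
  have "x mod 3 = 0 \<or> x mod 3 = 1 \<or> x mod 3 = 2" by arith
  then show ?thesis by (auto simp: bk_def mod_Suc)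
qed

lemma bkSS: "bk (Suc (Suc x)) = (if x mod 3 = 0 then rC else if x mod 3 = 1 then rD else rB)"
proof -
  have "x mod 3 = 0 \<or> x mod 3 = 1 \<or> x mod 3 = 2" by arith
  then show ?thesis by (auto simp: bk_def mod_Suc)
qed

lemma wit_triples:
  "OK3 z rA rB" "OK3 rA rB rC" "OK3 rA rB rE" "OK3 rD rB rC" "OK3 rD rB rE"
  "OK3 rB rC rD" "OK3 rC rD rB" "OK3 rB rE rF" "OK3 rE rF z"
  by (simp_all add: rA_def rB_def rC_def rD_def rE_def rF_def z_def atm2_def)

lemma wit_ok:
  assumes k2: "2 \<le> k"
  shows "OK3 (if i = 0 then z else wr k (i-1)) (wr k i) (wr k (Suc i))"
proof -
  consider "i = 0" | "1 \<le> i \<and> i + 2 \<le> 3*k" | "i + 1 = 3*k" | "i = 3*k" | "3*k < i" using k2 by arith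
  then show ?thesis
  proof cases
    case 1
    have w1: "wr k (Suc 0) = rB" using k2 by (simp add: wr_def bk_def)
    have w0: "wr k 0 = rA" by (simp add: wr_def)
    show ?thesis unfolding 1 w0 w1 by (simp add: wit_triples)
  next
    case 2
    obtain j where ij: "i = Suc j" using 2 by (cases i) auto
    have j3: "j + 3 \<le> 3*k" using 2 ij by simp
    have e: "(if Suc j = 0 then z else wr k (Suc j - 1)) = wr k j" by simp
    have pj: "wr k j = (if j = 0 then rA else bk j)" using j3 by (simp add: wr_def)
    have cur0: "wr k (Suc j) = bk (Suc j)" using j3 by (simp add: wr_def)
    have nx0: "wr k (Suc (Suc j)) = (if j + 4 \<le> 3*k then bk (Suc (Suc j)) else rE)" using j3 by (simp add: wr_def)
    have G: "OK3 (if j = 0 then rA else bk j) (bk (Suc j)) (if j + 4 \<le> 3*k then bk (Suc (Suc j)) else rE)"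
    proof -
      have "j mod 3 = 0 \<or> j mod 3 = 1 \<or> j mod 3 = 2" by arith
      moreover
      { assume r: "j mod 3 = 0"
        have b0: "bk j = rD" using r by (simp add: bk_def)
        have b1: "bk (Suc j) = rB" using r by (simp add: bkS)
        have b2: "bk (Suc (Suc j)) = rC" using r by (simp add: bkSS)
        have ?thesis unfolding b0 b1 b2
          by (cases "j = 0"; cases "j + 4 \<le> 3*k") (simp_all add: wit_triples) }
      moreover
      { assume r: "j mod 3 = 1"
        have j0: "j \<noteq> 0" using r by auto
        have "j + 3 \<noteq> 3*k" using r by presburger
        then have j4: "j + 4 \<le> 3*k" using j3 by simp
        have b0: "bk j = rB" using r by (simp add: bk_def)
        have b1: "bk (Suc j) = rC" using r by (simp add: bkS)
        have b2: "bk (Suc (Suc j)) = rD" using r by (simp add: bkSS)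
        have ?thesis unfolding b0 b1 b2 using j0 j4 by (simp add: wit_triples) }
      moreover
      { assume r: "j mod 3 = 2"
        have j0: "j \<noteq> 0" using r by auto
        have "j + 3 \<noteq> 3*k" using r by presburger
        then have j4: "j + 4 \<le> 3*k" using j3 by simp
        have b0: "bk j = rC" using r by (simp add: bk_def)
        have b1: "bk (Suc j) = rD" using r by (simp add: bkS)
        have b2: "bk (Suc (Suc j)) = rB" using r by (simp add: bkSS)
        have ?thesis unfolding b0 b1 b2 using j0 j4 by (simp add: wit_triples) }
      ultimately show ?thesis by metis
    qed
    show ?thesis unfolding ij e pj cur0 nx0 by (rule G)
  next
    case 3
    obtain j where ij: "i = Suc j" using 3 k2 by (cases i) auto
    have j2: "j + 2 = 3*k" using 3 ij by simp
    have e: "(if Suc j = 0 then z else wr k (Suc j - 1)) = wr k j" by simp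
    have jm: "j mod 3 = 1" using j2 by presburger
    have pj: "wr k j = rB" using j2 jm k2 by (simp add: wr_def bk_def)
    have cj: "wr k (Suc j) = rE" using j2 by (simp add: wr_def)
    have nj: "wr k (Suc (Suc j)) = rF" using j2 by (simp add: wr_def)
    show ?thesis unfolding ij e pj cj nj by (rule wit_triples)
  next
    case 4
    have "i \<noteq> 0" using 4 k2 by simp
    then obtain j where ij: "i = Suc j" using not0_implies_Suc by blast
    have j1: "j + 1 = 3*k" using 4 ij by simp
    have e: "(if Suc j = 0 then z else wr k (Suc j - 1)) = wr k j" by simp
    have pj: "wr k j = rE" using j1 k2 by (simp add: wr_def)
    have cj: "wr k (Suc j) = rF" using j1 by (simp add: wr_def)
    have nj: "wr k (Suc (Suc j)) = z" using j1 by (simp add: wr_def)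
    show ?thesis unfolding ij e pj cj nj by (rule wit_triples)
  next
    case 5
    then show ?thesis using wr_z[OF 5] OK3_z by simp
  qed
qed

definition g :: "nat \<Rightarrow> row" where "g i = (if i = 0 then rA else bk i)"

lemma sum_g: "(\<Sum>i<3*m+1. fw (g i)) = 6 + 16*m"
proof (induction m)
  case 0 then show ?case by (simp add: g_def rA_def)
next
  case (Suc m)
  have e: "3 * Suc m + 1 = Suc (Suc (Suc (3*m+1)))" by simp
  have a: "(3*m+1) mod 3 = 1" "(Suc (3*m+1)) mod 3 = 2" "(Suc (Suc (3*m+1))) mod 3 = 0" by presburger+
  show ?case unfolding e using Suc.IH a
    by (simp add: g_def bk_def rB_def rC_def rD_def)
qed

lemma sum_wr:
  assumes k2: "2 \<le> k"
  shows "(\<Sum>i<3*k+1. fw (wr k i)) = 16*k+8"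
proof -
  obtain m where m: "k = Suc m" using k2 by (cases k) auto
  have e: "3*k+1 = Suc (Suc (Suc (3*m+1)))" using m by simp
  have cong: "(\<Sum>i<3*m+1. fw (wr k i)) = (\<Sum>i<3*m+1. fw (g i))"
  proof (rule sum.cong)
    fix i assume "i \<in> {..<3*m+1}"
    then have "i + 2 \<le> 3*k" using m by simp
    then show "fw (wr k i) = fw (g i)" by (simp add: wr_def g_def)
  qed simp
  have w1: "wr k (3*m+1) = rB"
  proof -
    have "(3*m+1) mod 3 = 1" by presburger
    moreover have "3*m+1 + 2 \<le> 3*k" using m by simp
    ultimately show ?thesis by (simp add: wr_def bk_def)
  qed
  have w2: "wr k (Suc (3*m+1)) = rE" using m k2 by (simp add: wr_def)
  have w3: "wr k (Suc (Suc (3*m+1))) = rF" using m k2 by (simp add: wr_def)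
  show ?thesis unfolding e using cong sum_g[of m] w1 w2 w3 m
    by (simp add: rB_def rE_def rF_def)
qed

lemma witness:
  assumes k2: "2 \<le> k"
  shows "Vw k \<in> W2 (3*k+1) 4" "card (Vw k) = 8*k+4"
proof -
  have sub4: "Vw k \<subseteq> {0..<3*k+1} \<times> {0..<4}" by (rule Vw_sub)
  have sub5: "Vw k \<subseteq> {0..<3*k+1} \<times> {0..<5}" using sub4 by auto
  have "\<forall>i. OK3 (prv (Vw k) i) (rowW (Vw k) i) (rowW (Vw k) (Suc i))"
  proof
    fix i show "OK3 (prv (Vw k) i) (rowW (Vw k) i) (rowW (Vw k) (Suc i))"
      using wit_ok[OF k2, of i] by (simp only: prv_def rowW_Vw)
  qed
  then have "\<forall>c\<in>Vw k. degree (Vw k) c \<le> 2" using OK3_iff[OF sub5] by blast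
  then show "Vw k \<in> W2 (3*k+1) 4" using sub4 by (simp add: W2_def bwords_def)
  have c3: "cols (Vw k) 0 3 = Vw k" using sub4 unfolding cols_def by force
  have c4: "cols (Vw k) 4 4 = {}" using sub4 unfolding cols_def by force
  have "(\<Sum>i<3*k+1. fw (rowW (Vw k) i)) = 2 * card (Vw k)"
    using fw_sum[OF sub5] c3 c4 by simp
  then show "card (Vw k) = 8*k+4" using sum_wr[OF k2] by (simp add: rowW_Vw)
qed

theorem mainTheorem7:
  fixes k :: nat and W :: "(nat \<times> nat) set"
  assumes "k \<ge> 2"
    and "W \<in> W2 (3*k+1) 5"
    and "two_full (3*k+1) 4 (cols W 0 3)"
  shows "excess (3*k+1) 1 (cols W 4 4) \<le> - 5/3"
proof -
  have k2: "2 \<le> k" using assms(1) by simp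
  have sub: "W \<subseteq> {0..<3*k+1} \<times> {0..<5}" and deg: "\<forall>c\<in>W. degree W c \<le> 2"
    using assms(2) by (auto simp: W2_def bwords_def)
  have OKW: "\<forall>i. OK3 (prv W i) (rowW W i) (rowW W (Suc i))" using OK3_iff[OF sub] deg by blast
  have H: "\<And>i. Tx (rowW W i) (Ux (prv W i) (rowW W i)) (rowW W (Suc i)) \<and> Vx (rowW W i) (rowW W (Suc i))"
  proof -
    fix i
    have "OK3 (prv W (Suc i)) (rowW W (Suc i)) (rowW W (Suc (Suc i)))" using OKW by blast
    then have "OK3 (rowW W i) (rowW W (Suc i)) (rowW W (Suc (Suc i)))" by (simp add: prv_def)
    then show "Tx (rowW W i) (Ux (prv W i) (rowW W i)) (rowW W (Suc i)) \<and> Vx (rowW W i) (rowW W (Suc i))"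
      using TV OKW by blast
  qed
  have pv: "\<And>i. prv W i = (if i = 0 then z else rowW W (i - 1))" by (simp add: prv_def)
  have hm: "(3*k+1) mod 3 = 1" by presburger
  have I: "(\<Sum>i<3*k+1. fw (rowW W i)) + 10 \<le> 6*(3*k+1) + psi 1 (rowW W (3*k)) (Ux (prv W (3*k)) (rowW W (3*k)))"
    using inv[OF H pv, of "3*k+1"] k2 hm by simp
  have "psi 1 (rowW W (3*k)) (Ux (prv W (3*k)) (rowW W (3*k))) \<le> 11" by (rule fin_allr)
  then have S: "(\<Sum>i<3*k+1. fw (rowW W i)) \<le> 18*k+7" using I by simp
  have "2 * card (cols W 0 3) + card (cols W 4 4) \<le> 18*k+7" using S fw_sum[OF sub] by simp
  moreover have "8*k+4 \<le> card (cols W 0 3)" using assms(3) witness[OF k2] unfolding two_full_def by metis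
  ultimately have B': "card (cols W 4 4) + 1 \<le> 2*k" by simp
  have "real (card (cols W 4 4) + 1) \<le> real (2*k)" using B' by (simp only: of_nat_le_iff)
  then have "real (card (cols W 4 4)) + 1 \<le> 2 * real k" by simp
  moreover have "excess (3*k+1) 1 (cols W 4 4) = real (card (cols W 4 4)) - (2 + 6 * real k) / 3"
    by (simp add: excess_def)
  moreover have "(2 + 6 * real k) / 3 = 2/3 + 2 * real k" by simp
  ultimately show ?thesis by linarith
qed


end
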